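(* Let $d\ge1$, $L\ge1$ be integers and ${\Gamma}=\{x\in\mathbb{Z}^d\mid 0\le x_\mu<L\}$ with periodic boundary conditions. Let $c(x)$ be a real (or complex) periodic field on ${\Gamma}$ with $\sum_{x\in{\Gamma}}c(x)=0$. Then there exists a periodic current $b_\mu(x)$, $\mu=1,\dots,d$, on ${\Gamma}$ of the form $b_\mu(x)=\sum_{y\in{\Gamma}}\beta_\mu(x,y)c(y)$ with real coefficients $\beta_\mu(x,y)$ not depending on $c$, such that $$\sum_{\mu=1}^d\partial^*_\mu b_\mu(x)=c(x)\quad\text{and}\quad |b_\mu(x)|\le 2L\max_{y\in{\Gamma}}|c(y)|\quad\text{for all }x,\mu.$$
   Context: $\hat\mu$ denotes the unit vector in direction $\mu$, and $\partial^*_\mu f(x)=f(x)-f(x-\hat\mu)$ is the backward difference operator, with points of ${\Gamma}$ understood periodically (modulo $L$ in each coordinate). *)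

theory Defs
  imports Complex_Main
begin

text \<open>Points of the periodic lattice Gamma = {x in Z^d | 0 <= x_mu < L}, with directions
  indexed by 0..d-1 (the paper's 1..d). A point is a function nat => nat, with
  coordinates beyond d fixed to 0 so that points are uniquely represented.\<close>
definition lattice :: "nat \<Rightarrow> nat \<Rightarrow> (nat \<Rightarrow> nat) set" where
  "lattice d L = {x. (\<forall>i<d. x i < L) \<and> (\<forall>i\<ge>d. x i = 0)}"

definition shift_back :: "nat \<Rightarrow> (nat \<Rightarrow> nat) \<Rightarrow> nat \<Rightarrow> (nat \<Rightarrow> nat)" where
  "shift_back L x \<mu> = x(\<mu> := (x \<mu> + L - 1) mod L)"

definition bwd_diff :: "nat \<Rightarrow> ((nat \<Rightarrow> nat) \<Rightarrow> 'a::ab_group_add) \<Rightarrow> nat \<Rightarrow> (nat \<Rightarrow> nat) \<Rightarrow> 'a" where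
  "bwd_diff L f \<mu> x = f x - f (shift_back L x \<mu>)"

end

theory Submission
  imports Defs
begin

definition wt :: "nat \<Rightarrow> nat \<Rightarrow> (nat \<Rightarrow> nat) \<Rightarrow> (nat \<Rightarrow> nat) \<Rightarrow> real" where
  "wt L k x y = (if \<forall>i\<ge>k. y i = x i then 1 / real L ^ k else 0)"

definition avg :: "nat \<Rightarrow> nat \<Rightarrow> nat \<Rightarrow> ((nat \<Rightarrow> nat) \<Rightarrow> complex) \<Rightarrow> (nat \<Rightarrow> nat) \<Rightarrow> complex" where
  "avg d L k c x = (\<Sum>y\<in>lattice d L. complex_of_real (wt L k x y) * c y)"

lemma lattice_finite: "finite (lattice d L)"
proof -
  have "lattice d L \<subseteq> (\<lambda>xs i. if i < d then xs ! i else 0) ` {xs. set xs \<subseteq> {..<L} \<and> length xs = d}"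
  proof
    fix x assume x: "x \<in> lattice d L"
    let ?xs = "map x [0..<d]"
    have "x = (\<lambda>i. if i < d then ?xs ! i else 0)"
      using x by (auto simp: lattice_def fun_eq_iff)
    moreover have "?xs \<in> {xs. set xs \<subseteq> {..<L} \<and> length xs = d}"
      using x by (auto simp: lattice_def)
    ultimately show "x \<in> (\<lambda>xs i. if i < d then xs ! i else 0) ` {xs. set xs \<subseteq> {..<L} \<and> length xs = d}"
      by blast
  qed
  moreover have "finite {xs. set xs \<subseteq> {..<L} \<and> length xs = d}"
    by (rule finite_lists_length_eq) auto
  ultimately show ?thesis by (meson finite_surj)
qed

lemma lattice_upd: "x \<in> lattice d L \<Longrightarrow> k < d \<Longrightarrow> t < L \<Longrightarrow> x(k := t) \<in> lattice d L"
  by (auto simp: lattice_def)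

lemma wt_line:
  assumes "k < d" "y \<in> lattice d L" "L \<ge> 1"
  shows "(\<Sum>t<L. wt L k (x(k:=t)) y) = real L * wt L (Suc k) x y"
proof -
  let ?P = "\<forall>i\<ge>Suc k. y i = x i"
  have eq: "(\<forall>i\<ge>k. y i = (x(k:=t)) i) \<longleftrightarrow> (t = y k \<and> ?P)" for t
    by (auto simp: Suc_le_eq)
  have yk: "y k < L" using assms by (auto simp: lattice_def)
  have "(\<Sum>t<L. wt L k (x(k:=t)) y) = (\<Sum>t<L. if t = y k \<and> ?P then 1 / real L ^ k else 0)"
    unfolding wt_def using eq by simp
  also have "\<dots> = (if ?P then 1 / real L ^ k else 0)"
  proof (cases ?P)
    case True then show ?thesis using yk by (simp add: sum.delta)
  next
    case False
    have h: "(\<Sum>t<L. if t = y k \<and> ?P then 1 / real L ^ k else 0) = 0"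
      using False by (intro sum.neutral ballI if_not_P) blast
    show ?thesis by (simp only: h if_not_P[OF False])
  qed
  also have "\<dots> = real L * wt L (Suc k) x y"
    using assms(3) by (simp add: wt_def)
  finally show ?thesis .
qed

lemma wt_upd: "wt L (Suc k) (x(k:=t)) y = wt L (Suc k) x y"
  by (simp add: wt_def)

lemma wt_nonneg: "wt L k x y \<ge> 0"
  by (simp add: wt_def)

lemma wt_sum:
  assumes "k \<le> d" "x \<in> lattice d L" "L \<ge> 1"
  shows "(\<Sum>y\<in>lattice d L. wt L k x y) = 1"
  using assms(1,2)
proof (induction k arbitrary: x)
  case 0
  have "wt L 0 x y = (if y = x then 1 else 0)" for y
    by (auto simp: wt_def fun_eq_iff)
  then show ?case using 0 lattice_finite by (simp add: sum.delta')
next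
  case (Suc k)
  have "(\<Sum>y\<in>lattice d L. wt L (Suc k) x y)
      = (\<Sum>y\<in>lattice d L. (1 / real L) * (\<Sum>t<L. wt L k (x(k:=t)) y))"
    using wt_line[of k d _ L x] Suc.prems assms(3) by (intro sum.cong) auto
  also have "\<dots> = (1 / real L) * (\<Sum>t<L. \<Sum>y\<in>lattice d L. wt L k (x(k:=t)) y)"
    by (simp add: sum_distrib_left sum.swap[of _ "lattice d L"])
  also have "\<dots> = (1 / real L) * (\<Sum>t<L. 1)"
    using Suc lattice_upd[of x d L k] by (intro arg_cong[where f="\<lambda>s. _ * s"] sum.cong) auto
  also have "\<dots> = 1" using assms(3) by simp
  finally show ?case .
qed

lemma avg_line:
  assumes "k < d" "L \<ge> 1"
  shows "(\<Sum>t<L. avg d L k c (x(k:=t))) = of_nat L * avg d L (Suc k) c x"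
proof -
  have "(\<Sum>t<L. avg d L k c (x(k:=t)))
      = (\<Sum>y\<in>lattice d L. complex_of_real (\<Sum>t<L. wt L k (x(k:=t)) y) * c y)"
    unfolding avg_def by (simp add: sum.swap[of _ "{..<L}"] sum_distrib_right of_real_sum)
  also have "\<dots> = (\<Sum>y\<in>lattice d L. of_nat L * (complex_of_real (wt L (Suc k) x y) * c y))"
    using wt_line[OF assms(1) _ assms(2)] by (intro sum.cong) auto
  also have "\<dots> = of_nat L * avg d L (Suc k) c x"
    unfolding avg_def by (simp add: sum_distrib_left)
  finally show ?thesis .
qed

lemma avg_upd: "avg d L (Suc k) c (x(k:=t)) = avg d L (Suc k) c x"
  by (simp add: avg_def wt_upd)

lemma avg_0: "x \<in> lattice d L \<Longrightarrow> avg d L 0 c x = c x"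
proof -
  assume x: "x \<in> lattice d L"
  have "wt L 0 x y = (if y = x then 1 else 0)" for y
    by (auto simp: wt_def fun_eq_iff)
  then have "avg d L 0 c x = (\<Sum>y\<in>lattice d L. if y = x then c y else 0)"
    unfolding avg_def by (intro sum.cong) auto
  then show ?thesis using x lattice_finite by (simp add: sum.delta')
qed

lemma avg_d:
  assumes "x \<in> lattice d L" "(\<Sum>y\<in>lattice d L. c y) = 0"
  shows "avg d L d c x = 0"
proof -
  have "avg d L d c x = (\<Sum>y\<in>lattice d L. complex_of_real (1 / real L ^ d) * c y)"
    unfolding avg_def using assms(1) by (intro sum.cong) (auto simp: wt_def lattice_def)
  also have "\<dots> = 0" using assms(2) by (simp add: sum_divide_distrib[symmetric])
  finally show ?thesis .
qed

lemma avg_bound: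
  assumes "k \<le> d" "x \<in> lattice d L" "L \<ge> 1" "\<And>y. y \<in> lattice d L \<Longrightarrow> norm (c y) \<le> M"
  shows "norm (avg d L k c x) \<le> M"
proof -
  have "norm (avg d L k c x) \<le> (\<Sum>y\<in>lattice d L. norm (complex_of_real (wt L k x y) * c y))"
    unfolding avg_def by (rule norm_sum)
  also have "\<dots> \<le> (\<Sum>y\<in>lattice d L. wt L k x y * M)"
    using assms(4) wt_nonneg by (intro sum_mono) (auto simp: norm_mult intro: mult_left_mono)
  also have "\<dots> = M" using wt_sum[OF assms(1-3)] by (simp add: sum_distrib_right[symmetric])
  finally show ?thesis .
qed

theorem lemma3p1:
  fixes d L :: nat
  assumes "d \<ge> 1" and "L \<ge> 1"
  shows "\<exists>\<beta> :: nat \<Rightarrow> (nat \<Rightarrow> nat) \<Rightarrow> (nat \<Rightarrow> nat) \<Rightarrow> real.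
           \<forall>c :: (nat \<Rightarrow> nat) \<Rightarrow> complex.
             (\<Sum>x\<in>lattice d L. c x) = 0 \<longrightarrow>
             (let b = (\<lambda>\<mu> x. \<Sum>y\<in>lattice d L. complex_of_real (\<beta> \<mu> x y) * c y)
              in (\<forall>x\<in>lattice d L. (\<Sum>\<mu><d. bwd_diff L (b \<mu>) \<mu> x) = c x) \<and>
                 (\<forall>x\<in>lattice d L. \<forall>\<mu><d.
                    norm (b \<mu> x) \<le> 2 * real L * Max ((\<lambda>y. norm (c y)) ` lattice d L)))"
proof (intro exI allI impI)
  define \<beta> where "\<beta> = (\<lambda>k x y. \<Sum>t<Suc (x k). wt L k (x(k:=t)) y - wt L (Suc k) (x(k:=t)) y)"
  fix c :: "(nat \<Rightarrow> nat) \<Rightarrow> complex"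
  assume c0: "(\<Sum>x\<in>lattice d L. c x) = 0"
  define G where "G = (\<lambda>k x. avg d L k c x - avg d L (Suc k) c x)"
  define b where "b = (\<lambda>\<mu> x. \<Sum>y\<in>lattice d L. complex_of_real (\<beta> \<mu> x y) * c y)"
  have b_eq: "b k x = (\<Sum>t<Suc (x k). G k (x(k:=t)))" for k x
    unfolding b_def \<beta>_def G_def avg_def
    by (simp add: of_real_sum sum_distrib_right sum.swap[of _ "lattice d L"] left_diff_distrib
        sum_subtractf del: sum.lessThan_Suc)
  define M where "M = Max ((\<lambda>y. norm (c y)) ` lattice d L)"
  have M: "norm (c y) \<le> M" if "y \<in> lattice d L" for y
    unfolding M_def using that lattice_finite by (intro Max_ge) auto
  have Gline: "(\<Sum>t<L. G k (x(k:=t))) = 0" if "k < d" for k x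
  proof -
    have "(\<Sum>t<L. G k (x(k:=t))) = of_nat L * avg d L (Suc k) c x - (\<Sum>t<L. avg d L (Suc k) c x)"
      unfolding G_def using avg_line[OF that assms(2)] by (simp add: sum_subtractf avg_upd)
    then show ?thesis by simp
  qed
  have diff: "bwd_diff L (b k) k x = G k x" if "k < d" "x \<in> lattice d L" for k x
  proof (cases "x k = 0")
    case True
    have "shift_back L x k = x(k := L - 1)"
      using True assms(2) by (simp add: shift_back_def)
    then have "b k (shift_back L x k) = (\<Sum>t<L. G k (x(k:=t)))"
      using assms(2) by (simp add: b_eq)
    then have "b k (shift_back L x k) = 0" using Gline that by simp
    moreover have "b k x = G k x" using True by (simp add: b_eq fun_upd_idem[of x k 0, OF True])
    ultimately show ?thesis by (simp add: bwd_diff_def)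
  next
    case False
    have xk: "x k < L" using that by (auto simp: lattice_def)
    have e: "x k + L - 1 = (x k - 1) + L" using False by simp
    have e2: "(x k - 1 + L) mod L = x k - 1" using xk by (simp only: mod_add_self2) simp
    have "(x k + L - 1) mod L = x k - 1" by (subst e, rule e2)
    then have "shift_back L x k = x(k := x k - 1)" by (simp add: shift_back_def)
    then have "b k (shift_back L x k) = (\<Sum>t<x k. G k (x(k:=t)))"
      using False by (simp add: b_eq)
    moreover have "b k x = (\<Sum>t<x k. G k (x(k:=t))) + G k x" by (simp add: b_eq)
    ultimately show ?thesis by (simp add: bwd_diff_def)
  qed
  have part1: "(\<Sum>\<mu><d. bwd_diff L (b \<mu>) \<mu> x) = c x" if x: "x \<in> lattice d L" for x
  proof -
    have "(\<Sum>\<mu><d. bwd_diff L (b \<mu>) \<mu> x) = (\<Sum>\<mu><d. G \<mu> x)"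
      using diff x by simp
    also have "\<dots> = avg d L 0 c x - avg d L d c x"
      unfolding G_def by (rule sum_lessThan_telescope')
    also have "\<dots> = c x" using avg_0[OF x] avg_d[OF x c0] by simp
    finally show ?thesis .
  qed
  have part2: "norm (b \<mu> x) \<le> 2 * real L * M" if x: "x \<in> lattice d L" and mu: "\<mu> < d" for x \<mu>
  proof -
    have xk: "x \<mu> < L" using that by (auto simp: lattice_def)
    have Gb: "norm (G \<mu> (x(\<mu>:=t))) \<le> 2 * M" if "t < Suc (x \<mu>)" for t
    proof -
      have xt: "x(\<mu>:=t) \<in> lattice d L" using lattice_upd[OF x mu] that xk by simp
      have "norm (G \<mu> (x(\<mu>:=t))) \<le> norm (avg d L \<mu> c (x(\<mu>:=t))) + norm (avg d L (Suc \<mu>) c (x(\<mu>:=t)))"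
        unfolding G_def by (rule norm_triangle_ineq4)
      also have "\<dots> \<le> M + M"
        using avg_bound[OF _ xt assms(2) M, of \<mu>] avg_bound[OF _ xt assms(2) M, of "Suc \<mu>"] mu
        by (intro add_mono) auto
      finally show ?thesis by simp
    qed
    have "norm (b \<mu> x) \<le> (\<Sum>t<Suc (x \<mu>). norm (G \<mu> (x(\<mu>:=t))))"
      unfolding b_eq by (rule norm_sum)
    also have "\<dots> \<le> (\<Sum>t<Suc (x \<mu>). 2 * M)" using Gb by (intro sum_mono) auto
    also have "\<dots> = real (Suc (x \<mu>)) * (2 * M)" by simp
    also have "\<dots> \<le> real L * (2 * M)"
    proof (rule mult_right_mono)
      show "real (Suc (x \<mu>)) \<le> real L" using xk by simp
      show "0 \<le> 2 * M" using M[OF x] by (meson norm_ge_zero order_trans zero_le_mult_iff zero_le_numeral)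
    qed
    finally show ?thesis by simp
  qed
  show "let b = (\<lambda>\<mu> x. \<Sum>y\<in>lattice d L. complex_of_real (\<beta> \<mu> x y) * c y)
              in (\<forall>x\<in>lattice d L. (\<Sum>\<mu><d. bwd_diff L (b \<mu>) \<mu> x) = c x) \<and>
                 (\<forall>x\<in>lattice d L. \<forall>\<mu><d.
                    norm (b \<mu> x) \<le> 2 * real L * Max ((\<lambda>y. norm (c y)) ` lattice d L))"
    using part1 part2 unfolding Let_def b_def[symmetric] M_def[symmetric] by blast
qed

end
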